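(* Let $s(t)\in\mathbb{R}^n$ and $\tilde a(t)\in\mathbb{R}^h$ evolve according to $$\begin{bmatrix} M & 0\\ 0 & P^{-1}\end{bmatrix}\begin{bmatrix}\dot s\\ \dot{\tilde a}\end{bmatrix} + \begin{bmatrix} C+K & \phi\\ -\phi^\top & \phi^\top R^{-1}\phi + \lambda P^{-1}\end{bmatrix}\begin{bmatrix} s\\ \tilde a\end{bmatrix} = \begin{bmatrix} d\\ \phi^\top R^{-1}\bar\epsilon - P^{-1}\lambda a - P^{-1}\dot a\end{bmatrix},$$ $$\frac{d}{dt}\big(P^{-1}\big) = P^{-1}\big(2\lambda P - Q + P\phi^\top R^{-1}\phi P\big)P^{-1},$$ with $P^{-1}$ uniformly positive definite and uniformly bounded, and define $\mathcal{M} = \begin{bmatrix} M & 0\\ 0 & P^{-1}\end{bmatrix}$. If $\phi\equiv 0$, then $$\lim_{t\to\infty}\left\|\begin{bmatrix} s\\ \tilde a\end{bmatrix}\right\| \le \frac{\sup\|d\| + \lambda_{\max}(P^{-1})\sup\|\lambda a + \dot a\|}{\min\big(\lambda, \lambda_{\min}(K)/\lambda_{\max}(M)\big)\,\lambda_{\min}(\mathcal{M})}.$$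
   Context: $M=M(q(t))$ is a uniformly positive definite, uniformly bounded symmetric inertia matrix and $C$ the Coriolis matrix with $\dot M - 2C$ skew-symmetric; $K$ is a uniformly positive definite, bounded gain matrix; $Q$ and $R$ are positive definite gain matrices (with $Q$ uniformly positive definite); $\lambda>0$ is a damping gain; $a(t)$ is a differentiable parameter vector; $d(t)$ and $\bar\epsilon(t)$ are bounded disturbance signals. $\lambda_{\min}(\cdot)$ and $\lambda_{\max}(\cdot)$ denote the minimum and maximum eigenvalue of the argument over all time. *)

theory Defs
  imports "HOL-Analysis.Analysis"
begin

text \<open>Real eigenvalues of a square matrix, and the minimum / maximum eigenvalue
  (meaningful for symmetric matrices, for which all eigenvalues are real).\<close>
definition eigvals :: "real^'n^'n \<Rightarrow> real set" where
  "eigvals A = {\<mu>. \<exists>v. v \<noteq> 0 \<and> A *v v = \<mu> *\<^sub>R v}"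

definition lam_min :: "real^'n^'n \<Rightarrow> real" where
  "lam_min A = Min (eigvals A)"

definition lam_max :: "real^'n^'n \<Rightarrow> real" where
  "lam_max A = Max (eigvals A)"

definition lam_min_T :: "real set \<Rightarrow> (real \<Rightarrow> real^'n^'n) \<Rightarrow> real" where
  "lam_min_T T A = (INF t\<in>T. lam_min (A t))"

definition lam_max_T :: "real set \<Rightarrow> (real \<Rightarrow> real^'n^'n) \<Rightarrow> real" where
  "lam_max_T T A = (SUP t\<in>T. lam_max (A t))"

definition symmetric_mat :: "real^'n^'n \<Rightarrow> bool" where
  "symmetric_mat A \<longleftrightarrow> transpose A = A"

definition pos_def :: "real^'n^'n \<Rightarrow> bool" where
  "pos_def A \<longleftrightarrow> symmetric_mat A \<and> (\<forall>x. x \<noteq> 0 \<longrightarrow> x \<bullet> (A *v x) > 0)"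

definition unif_pos_def :: "real set \<Rightarrow> (real \<Rightarrow> real^'n^'n) \<Rightarrow> bool" where
  "unif_pos_def T A \<longleftrightarrow> (\<exists>c>0. \<forall>t\<in>T. symmetric_mat (A t) \<and>
      (\<forall>x. x \<bullet> (A t *v x) \<ge> c * (norm x)\<^sup>2))"

definition stack :: "real^'n \<Rightarrow> real^'h \<Rightarrow> real^('n + 'h)" where
  "stack s a = (\<chi> i. case i of Inl j \<Rightarrow> s $ j | Inr j \<Rightarrow> a $ j)"

definition blockdiag :: "real^'n^'n \<Rightarrow> real^'h^'h \<Rightarrow> real^('n + 'h)^('n + 'h)" where
  "blockdiag A B = (\<chi> i k. case (i, k) of (Inl p, Inl q) \<Rightarrow> A $ p $ q
                                      | (Inr p, Inr q) \<Rightarrow> B $ p $ q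
                                      | _ \<Rightarrow> 0)"

end

theory Submission
  imports Defs
begin

lemma transpose_zero_mat: "transpose (0::real^'m^'n) = 0"
  by (simp add: transpose_def vec_eq_iff)

lemma sym_inner:
  fixes A :: "real^'n^'n"
  assumes "symmetric_mat A"
  shows "x \<bullet> (A *v y) = (A *v x) \<bullet> y"
proof -
  have "x \<bullet> (A *v y) = (x v* A) \<bullet> y" by (simp add: dot_lmul_matrix)
  also have "x v* A = transpose A *v x" by (simp add: transpose_matrix_vector)
  also have "transpose A = A" using assms by (simp add: symmetric_mat_def)
  finally show ?thesis .
qed

lemma quad_neg:
  fixes a c :: real
  assumes a: "0 < a" and H: "\<And>e. 0 \<le> 2 * e * a + e^2 * c"
  shows False
proof -
  define k where "k = \<bar>c\<bar> + 1"
  have k: "k > 0" "\<bar>c\<bar> \<le> k" by (auto simp: k_def)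
  define e where "e = - a / k"
  have h0: "0 \<le> 2 * e * a + e^2 * c" by (rule H)
  have h1: "e^2 * c \<le> e^2 * \<bar>c\<bar>" by (simp add: mult_left_mono)
  have h2: "e^2 * \<bar>c\<bar> \<le> e^2 * k" using k by (simp add: mult_left_mono)
  have h3: "2 * e * a + e^2 * k = -(a^2) / k"
  proof -
    have "e * k = - a" using k by (simp add: e_def)
    then have "(2 * e * a + e^2 * k) * k = -(a^2)" by (simp add: power2_eq_square algebra_simps) 
    moreover have "2 * e * a + e^2 * k = ((2 * e * a + e^2 * k) * k) / k" using k by simp
    ultimately show ?thesis by simp
  qed
  have "a^2 / k > 0" using a k by simp
  then show False using h0 h1 h2 h3 by simp
qed

lemma rayleigh_min:
  fixes A :: "real^'n^'n"
  assumes sym: "symmetric_mat A"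
  shows "\<exists>r\<in>eigvals A. \<forall>x. r * (norm x)^2 \<le> x \<bullet> (A *v x)"
proof -
  let ?S = "sphere (0::real^'n) 1"
  obtain i :: 'n where True by simp
  have "axis i 1 \<in> ?S" by simp
  then have ne: "?S \<noteq> {}" by blast
  have cont: "continuous_on ?S (\<lambda>x. x \<bullet> (A *v x))"
    by (intro continuous_intros linear_continuous_on matrix_vector_mul_bounded_linear)
  obtain u where u: "u \<in> ?S" and umin: "\<And>y. y \<in> ?S \<Longrightarrow> u \<bullet> (A *v u) \<le> y \<bullet> (A *v y)"
    using continuous_attains_inf[OF compact_sphere ne cont] by blast
  define r where "r = u \<bullet> (A *v u)"
  have nu: "norm u = 1" using u by simp
  have ge: "r * (norm x)^2 \<le> x \<bullet> (A *v x)" for x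
  proof (cases "x = 0")
    case True then show ?thesis by simp
  next
    case False
    let ?y = "(1/norm x) *\<^sub>R x"
    have "?y \<in> ?S" using False by simp
    then have "r \<le> ?y \<bullet> (A *v ?y)" unfolding r_def by (rule umin)
    also have "\<dots> = (x \<bullet> (A *v x)) / (norm x)^2"
      by (simp add: matrix_vector_mult_scaleR power2_eq_square)
    finally show ?thesis using False by (simp add: pos_le_divide_eq)
  qed
  define w where "w = A *v u - r *\<^sub>R u"
  define c where "c = w \<bullet> (A *v w) - r * (norm w)^2"
  have expand: "(u + e *\<^sub>R w) \<bullet> (A *v (u + e *\<^sub>R w)) - r * (norm (u + e *\<^sub>R w))^2
      = 2 * e * (norm w)^2 + e^2 * c" for e
  proof -
    have s: "u \<bullet> (A *v w) = w \<bullet> (A *v u)"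
      using sym_inner[OF sym, of u w] by (simp add: inner_commute)
    have n2: "(norm (u + e *\<^sub>R w))^2 = 1 + 2 * e * (u \<bullet> w) + e^2 * (norm w)^2"
    proof -
      have uu: "u \<bullet> u = 1" using nu by (simp add: dot_square_norm)
      have ww: "w \<bullet> w = (norm w)^2" by (simp add: dot_square_norm)
      have "(norm (u + e *\<^sub>R w))^2 = (u + e *\<^sub>R w) \<bullet> (u + e *\<^sub>R w)" by (rule power2_norm_eq_inner)
      also have "\<dots> = u \<bullet> u + 2 * e * (u \<bullet> w) + e^2 * (w \<bullet> w)"
        by (simp add: inner_add inner_commute algebra_simps power2_eq_square)
      finally show ?thesis using uu ww by simp
    qed
    have "(norm w)^2 = w \<bullet> (A *v u) - r * (w \<bullet> u)"
      by (simp add: w_def power2_norm_eq_inner inner_diff inner_commute algebra_simps)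
    then show ?thesis
      unfolding n2 c_def
      apply (simp add: matrix_vector_right_distrib matrix_vector_mult_scaleR inner_add s r_def
          inner_commute power2_eq_square algebra_simps)
      by (metis (no_types, lifting) distrib_left mult.commute mult.left_commute)
  qed
  have w0: "w = 0"
  proof (rule ccontr)
    assume "w \<noteq> 0"
    then have wp: "(norm w)^2 > 0" by simp
    have "0 \<le> 2 * e * (norm w)^2 + e^2 * c" for e
      using ge[of "u + e *\<^sub>R w"] expand[of e] by linarith
    then show False using quad_neg[OF wp] by blast
  qed
  have "r \<in> eigvals A"
    unfolding eigvals_def using w0 nu by (auto simp: w_def intro!: exI[of _ u])
  then show ?thesis using ge by blast
qed

lemma eigvals_finite:
  fixes A :: "real^'n^'n"
  assumes sym: "symmetric_mat A"
  shows "finite (eigvals A)"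
proof -
  define f where "f \<mu> = (SOME v. v \<noteq> 0 \<and> A *v v = \<mu> *\<^sub>R v)" for \<mu>
  have f: "f \<mu> \<noteq> 0 \<and> A *v f \<mu> = \<mu> *\<^sub>R f \<mu>" if "\<mu> \<in> eigvals A" for \<mu>
  proof -
    have "\<exists>v. v \<noteq> 0 \<and> A *v v = \<mu> *\<^sub>R v" using that by (simp add: eigvals_def)
    then show ?thesis unfolding f_def by (rule someI_ex)
  qed
  have inj: "inj_on f (eigvals A)"
  proof (rule inj_onI)
    fix x y assume x: "x \<in> eigvals A" and y: "y \<in> eigvals A" and e: "f x = f y"
    have "x *\<^sub>R f x = y *\<^sub>R f x" using f[OF x] f[OF y] e by metis
    then show "x = y" using f[OF x] by simp
  qed
  have orth: "pairwise orthogonal (f ` eigvals A)"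
  proof (clarsimp simp: pairwise_def)
    fix x y assume x: "x \<in> eigvals A" and y: "y \<in> eigvals A" and ne: "f x \<noteq> f y"
    have xy: "x \<noteq> y" using ne by blast
    have "x * (f x \<bullet> f y) = (A *v f x) \<bullet> f y" using f[OF x] by simp
    also have "\<dots> = f x \<bullet> (A *v f y)" using sym_inner[OF sym] by simp
    also have "\<dots> = y * (f x \<bullet> f y)" using f[OF y] by simp
    finally have "(x - y) * (f x \<bullet> f y) = 0" by (simp add: algebra_simps)
    then show "orthogonal (f x) (f y)" using xy by (simp add: orthogonal_def)
  qed
  have "0 \<notin> f ` eigvals A" using f by auto
  then have "independent (f ` eigvals A)" using pairwise_orthogonal_independent orth by blast
  then have "finite (f ` eigvals A)" using independent_bound by blast
  then show ?thesis using inj finite_imageD by blast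
qed

lemma lam_min_le:
  fixes A :: "real^'n^'n"
  assumes sym: "symmetric_mat A"
  shows "lam_min A * (norm x)^2 \<le> x \<bullet> (A *v x)" and "lam_min A \<in> eigvals A"
proof -
  obtain r where r: "r \<in> eigvals A" "\<forall>x. r * (norm x)^2 \<le> x \<bullet> (A *v x)"
    using rayleigh_min[OF sym] by blast
  have fin: "finite (eigvals A)" by (rule eigvals_finite[OF sym])
  have "lam_min A \<le> r" unfolding lam_min_def using fin r(1) by simp
  then show "lam_min A * (norm x)^2 \<le> x \<bullet> (A *v x)"
    using r(2) by (meson mult_right_mono order_trans zero_le_power2)
  show "lam_min A \<in> eigvals A" unfolding lam_min_def using fin r(1) by (intro Min_in) auto
qed

lemma neg_mv: "(- A) *v x = - (A *v (x::real^'n))"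
  by (simp add: vec_eq_iff matrix_vector_mult_def sum_negf)

lemma lam_max_ge:
  fixes A :: "real^'n^'n"
  assumes sym: "symmetric_mat A"
  shows "x \<bullet> (A *v x) \<le> lam_max A * (norm x)^2" and "lam_max A \<in> eigvals A"
proof -
  have symn: "symmetric_mat (- A)" using sym
    by (simp add: symmetric_mat_def transpose_def vec_eq_iff)
  obtain r where r: "r \<in> eigvals (- A)" "\<forall>x. r * (norm x)^2 \<le> x \<bullet> ((- A) *v x)"
    using rayleigh_min[OF symn] by blast
  have r': "- r \<in> eigvals A"
  proof -
    obtain v where "v \<noteq> 0" "(- A) *v v = r *\<^sub>R v" using r(1) by (auto simp: eigvals_def)
    moreover have "A *v v = - ((- A) *v v)" by (simp add: neg_mv)
    ultimately have "v \<noteq> 0" "A *v v = (- r) *\<^sub>R v" by auto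
    then show ?thesis by (auto simp: eigvals_def)
  qed
  have fin: "finite (eigvals A)" by (rule eigvals_finite[OF sym])
  have "- r \<le> lam_max A" unfolding lam_max_def using fin r' by simp
  moreover have "x \<bullet> (A *v x) \<le> - r * (norm x)^2" using r(2)[rule_format, of x] by (simp add: neg_mv)
  ultimately show "x \<bullet> (A *v x) \<le> lam_max A * (norm x)^2"
    by (meson mult_right_mono order_trans zero_le_power2)
  show "lam_max A \<in> eigvals A" unfolding lam_max_def using fin r' by (intro Max_in) auto
qed


lemma mvt_dec:
  fixes V V' :: "real \<Rightarrow> real"
  assumes cont: "continuous_on {0..} V"
    and der: "\<And>t. t > 0 \<Longrightarrow> (V has_real_derivative V' t) (at t)"
    and ab: "0 \<le> a" "a < b"
    and dec: "\<And>z. a < z \<Longrightarrow> z < b \<Longrightarrow> V' z \<le> - \<eta>"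
  shows "V b - V a \<le> - ((b - a) * \<eta>)"
proof -
  have c: "continuous_on {a..b} V" using ab by (intro continuous_on_subset[OF cont]) auto
  have d: "V differentiable (at x)" if "a < x" "x < b" for x
    using der[of x] that ab real_differentiable_def by force
  obtain l z where z: "a < z" "z < b" "DERIV V z :> l" "V b - V a = (b - a) * l"
    using MVT[OF ab(2) c d] by blast
  have "l = V' z" using DERIV_unique[OF z(3) der[of z]] z ab by linarith
  then have "l \<le> - \<eta>" using dec z by simp
  then have "(b - a) * l \<le> (b - a) * (- \<eta>)" using ab by (intro mult_left_mono) auto
  then show ?thesis using z(4) by simp
qed

lemma threshold:
  fixes V V' :: "real \<Rightarrow> real"
  assumes cont: "continuous_on {0..} V"
    and der: "\<And>t. t > 0 \<Longrightarrow> (V has_real_derivative V' t) (at t)"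
    and eta: "\<eta> > 0"
    and dec: "\<And>t. t > 0 \<Longrightarrow> V t > B \<Longrightarrow> V' t \<le> - \<eta>"
  shows "eventually (\<lambda>t. V t \<le> B) at_top"
proof -
  have stay: "V t \<le> B" if t1: "0 \<le> t1" "t1 \<le> t" "V t1 \<le> B" for t1 t
  proof (rule ccontr)
    assume nt: "\<not> V t \<le> B"
    define S where "S = {t1..t} \<inter> V -` {..B}"
    have cS: "closed S" unfolding S_def
      by (rule continuous_closed_preimage) (use cont t1 in \<open>auto intro: continuous_on_subset\<close>)
    have t1S: "t1 \<in> S" using t1 by (simp add: S_def)
    have bS: "bdd_above S" unfolding S_def by (rule bdd_aboveI[of _ t]) auto
    define t0 where "t0 = Sup S"
    have t0S: "t0 \<in> S" unfolding t0_def using closed_contains_Sup[OF _ bS cS] t1S by blast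
    have t0: "t1 \<le> t0" "t0 \<le> t" "V t0 \<le> B" using t0S by (auto simp: S_def)
    have lt: "t0 < t" using t0 nt by (cases "t0 = t") auto
    have above: "V z > B" if "t0 < z" "z \<le> t" for z
    proof (rule ccontr)
      assume "\<not> V z > B"
      then have "z \<in> S" using that t0 by (auto simp: S_def)
      then have "z \<le> t0" unfolding t0_def using bS by (rule cSup_upper)
      then show False using that by simp
    qed
    have "V t - V t0 \<le> - ((t - t0) * \<eta>)"
      by (rule mvt_dec[OF cont der]) (use t0 t1 lt above dec in auto)
    moreover have "(t - t0) * \<eta> > 0" using lt eta by simp
    ultimately show False using t0 nt by linarith
  qed
  have reach: "\<exists>t1\<ge>0. V t1 \<le> B"
  proof (rule ccontr)
    assume "\<not> ?thesis"
    then have all: "\<And>t. t \<ge> 0 \<Longrightarrow> V t > B" by force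
    define t2 where "t2 = 1 + (V 1 - B) / \<eta> + 1"
    have "V 1 - B > 0" using all[of 1] by simp
    then have pos: "(V 1 - B) / \<eta> > 0" using eta by simp
    then have lt: "1 < t2" by (simp add: t2_def)
    have "V t2 - V 1 \<le> - ((t2 - 1) * \<eta>)"
      by (rule mvt_dec[OF cont der]) (use lt all dec in auto)
    moreover have "(t2 - 1) * \<eta> = (V 1 - B) + \<eta>" using eta by (simp add: t2_def field_simps)
    ultimately have "V t2 < B" using eta by linarith
    then show False using all[of t2] lt by simp
  qed
  then obtain t1 where "t1 \<ge> 0" "V t1 \<le> B" by blast
  then show ?thesis unfolding eventually_at_top_linorder using stay by blast
qed

lemma stack_nth [simp]: "stack s a $ Inl j = s $ j" "stack s a $ Inr k = a $ k"
  by (simp_all add: stack_def)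

lemma stack_decomp: "x = stack (\<chi> j. x $ Inl j) (\<chi> k. x $ Inr k)"
  by (simp add: vec_eq_iff stack_def split: sum.split)

lemma sum_UNIV_Plus: "(\<Sum>i\<in>(UNIV::('a::finite + 'b::finite) set). f i) = (\<Sum>j\<in>UNIV. f (Inl j)) + (\<Sum>k\<in>UNIV. f (Inr k))"
proof -
  have "(\<Sum>i\<in>(UNIV::('a + 'b) set). f i) = (\<Sum>i\<in>(UNIV <+> UNIV). f i)" by simp
  also have "\<dots> = (\<Sum>j\<in>UNIV. f (Inl j)) + (\<Sum>k\<in>UNIV. f (Inr k))"
    by (subst sum.Plus) (auto simp: o_def)
  finally show ?thesis .
qed

lemma inner_stack: "stack s a \<bullet> stack s' a' = s \<bullet> s' + a \<bullet> a'"
  by (simp add: inner_vec_def sum_UNIV_Plus)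

lemma norm_stack_sq: "(norm (stack s a))^2 = (norm s)^2 + (norm a)^2"
  by (simp add: power2_norm_eq_inner inner_stack)

lemma norm_stack_le: "norm (stack s a) \<le> norm s + norm a"
proof -
  have "(norm (stack s a))^2 \<le> (norm s + norm a)^2"
    unfolding norm_stack_sq by (simp add: power2_sum)
  then show ?thesis by (simp add: power2_le_iff_abs_le)
qed

lemma norm_stack0: "norm (stack s 0) = norm s" "norm (stack 0 a) = norm a"
  using norm_stack_sq[of s 0] norm_stack_sq[of 0 a] by (auto intro: power2_eq_imp_eq)

lemma blockdiag_mv: "blockdiag A B *v stack s a = stack (A *v s) (B *v a)"
  by (simp add: vec_eq_iff blockdiag_def stack_def matrix_vector_mult_def sum_UNIV_Plus split: sum.split)

lemma blockdiag_quad: "stack s a \<bullet> (blockdiag A B *v stack s a) = s \<bullet> (A *v s) + a \<bullet> (B *v a)"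
  by (simp add: blockdiag_mv inner_stack)

lemma blockdiag_sym: "symmetric_mat A \<Longrightarrow> symmetric_mat B \<Longrightarrow> symmetric_mat (blockdiag A B)"
  unfolding symmetric_mat_def
  by (simp add: vec_eq_iff blockdiag_def transpose_def split: sum.split)

lemma bb_mv: "bounded_bilinear (\<lambda>(A::real^'n^'m) x. A *v x)"
proof
  fix A A' :: "real^'n^'m" and x x' :: "real^'n" and r :: real
  show "(A + A') *v x = A *v x + A' *v x" by (simp add: matrix_vector_mult_add_rdistrib)
  show "A *v (x + x') = A *v x + A *v x'" by (simp add: matrix_vector_right_distrib)
  show "(r *\<^sub>R A) *v x = r *\<^sub>R (A *v x)" by (simp add: scaleR_matrix_vector_assoc)
  show "A *v (r *\<^sub>R x) = r *\<^sub>R (A *v x)" by (simp add: matrix_vector_mult_scaleR)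
next
  show "\<exists>K. \<forall>(A::real^'n^'m) x. norm (A *v x) \<le> norm A * norm x * K"
  proof (intro exI allI)
    fix A :: "real^'n^'m" and x :: "real^'n"
    have "norm (A *v x) \<le> onorm ((*v) A) * norm x"
      by (rule onorm[OF matrix_vector_mul_bounded_linear])
    also have "onorm ((*v) A) \<le> (\<Sum>i\<in>UNIV. \<Sum>j\<in>UNIV. \<bar>A $ i $ j\<bar>)"
      by (rule onorm_le_matrix_component_sum)
    also have "\<dots> \<le> (\<Sum>i\<in>(UNIV::'m set). \<Sum>j\<in>(UNIV::'n set). norm A)"
      by (intro sum_mono) (rule order_trans[OF component_le_norm_cart Finite_Cartesian_Product.norm_nth_le])
    finally show "norm (A *v x) \<le> norm A * norm x * (real CARD('m) * real CARD('n))"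
      by (simp add: mult_right_mono algebra_simps)
  qed
qed

lemma mv_norm_le: "norm ((A::real^'n^'m) *v x) \<le> norm A * norm x * (real CARD('m) * real CARD('n))"
proof -
  have "norm (A *v x) \<le> onorm ((*v) A) * norm x"
    by (rule onorm[OF matrix_vector_mul_bounded_linear])
  also have "onorm ((*v) A) \<le> (\<Sum>i\<in>UNIV. \<Sum>j\<in>UNIV. \<bar>A $ i $ j\<bar>)"
    by (rule onorm_le_matrix_component_sum)
  also have "\<dots> \<le> (\<Sum>i\<in>(UNIV::'m set). \<Sum>j\<in>(UNIV::'n set). norm A)"
    by (intro sum_mono) (rule order_trans[OF component_le_norm_cart Finite_Cartesian_Product.norm_nth_le])
  finally show ?thesis by (simp add: mult_right_mono algebra_simps)
qed


lemma eig_lower: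
  fixes A :: "real^'n^'n"
  assumes "\<forall>x. c * (norm x)^2 \<le> x \<bullet> (A *v x)" "\<mu> \<in> eigvals A"
  shows "c \<le> \<mu>"
proof -
  obtain v where v: "v \<noteq> 0" "A *v v = \<mu> *\<^sub>R v" using assms(2) by (auto simp: eigvals_def)
  have "c * (norm v)^2 \<le> v \<bullet> (A *v v)" using assms(1) by blast
  also have "\<dots> = \<mu> * (norm v)^2" using v by (simp add: power2_norm_eq_inner)
  finally show ?thesis using v by simp
qed

lemma eig_upper:
  fixes A :: "real^'n^'n"
  assumes "\<mu> \<in> eigvals A"
  shows "\<mu> \<le> norm A * (real CARD('n) * real CARD('n))"
proof -
  obtain v where v: "v \<noteq> 0" "A *v v = \<mu> *\<^sub>R v" using assms by (auto simp: eigvals_def)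
  have "\<bar>\<mu>\<bar> * norm v = norm (A *v v)" using v by simp
  also have "\<dots> \<le> norm A * (real CARD('n) * real CARD('n)) * norm v"
    using mv_norm_le[of A v] by (simp add: algebra_simps)
  finally have "\<bar>\<mu>\<bar> \<le> norm A * (real CARD('n) * real CARD('n))" using v by simp
  then show ?thesis by simp
qed

lemma skew_quad:
  fixes S :: "real^'n^'n"
  assumes "transpose S = - S"
  shows "x \<bullet> (S *v x) = 0"
proof -
  have "x \<bullet> (S *v x) = (x v* S) \<bullet> x" by (simp add: dot_lmul_matrix)
  also have "x v* S = transpose S *v x" by (simp add: transpose_matrix_vector)
  also have "\<dots> = - (S *v x)" using assms by (simp add: neg_mv)
  finally have "x \<bullet> (S *v x) = - (x \<bullet> (S *v x))" by (simp add: inner_commute)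
  then show ?thesis by simp
qed

lemma alg_bound:
  fixes k D e x :: real
  assumes k: "k > 0" and D: "D \<ge> 0" and e: "e > 0" and x: "x > D / k + e"
  shows "2 * x * D - 2 * k * x^2 \<le> - (2 * k * e^2)"
proof -
  have "k * x > k * (D / k + e)" using x k by simp
  then have kx: "k * x - D \<ge> k * e" using k by (simp add: algebra_simps)
  have xe: "e \<le> x" using x D k by (smt (verit) divide_nonneg_pos)
  have "e * (k * e) \<le> x * (k * x - D)"
    by (rule mult_mono[OF xe kx]) (use xe e k in auto)
  then show ?thesis by (simp add: power2_eq_square algebra_simps)
qed

lemma sq_shift:
  fixes q a d :: real
  assumes "q \<ge> 1" "a \<ge> 0" "d > 0"
  shows "q * (a + d / q)^2 \<le> (q * a + d)^2"
proof -
  have q0: "q > 0" using assms by simp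
  have "q * (a + d / q)^2 = q * a^2 + 2 * a * d + d^2 / q"
    using q0 by (simp add: power2_eq_square field_simps)
  also have "q * a^2 \<le> q^2 * a^2"
    using assms by (simp add: power2_eq_square mult_right_mono)
  also have "d^2 / q \<le> d^2" using assms by (simp add: divide_le_eq)
  finally have "q * (a + d / q)^2 \<le> q^2 * a^2 + 2 * a * d + d^2" by simp
  also have "2 * a * d \<le> 2 * q * a * d" using assms by (simp add: mult_right_mono)
  finally show ?thesis by (simp add: power2_eq_square algebra_simps)
qed

theorem corollary2:
  fixes M C K Mdot :: "real \<Rightarrow> real^'n^'n"
    and P Q Pinv Pinvdot :: "real \<Rightarrow> real^'h^'h"
    and R :: "real \<Rightarrow> real^'n^'n"
    and \<phi> :: "real \<Rightarrow> real^'h^'n"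
    and s sdot d \<epsilon> :: "real \<Rightarrow> real^'n"
    and atil atdot a adot :: "real \<Rightarrow> real^'h"
    and lam :: real
  defines "T \<equiv> {0::real..}"
  assumes M_sym: "\<And>t. t \<in> T \<Longrightarrow> symmetric_mat (M t)"
    and M_pd: "unif_pos_def T M" and M_bdd: "bounded (M ` T)"
    and M_deriv: "\<And>t. t \<in> T \<Longrightarrow> (M has_vector_derivative Mdot t) (at t within T)"
    and skew: "\<And>t. t \<in> T \<Longrightarrow> transpose (Mdot t - 2 *\<^sub>R C t) = - (Mdot t - 2 *\<^sub>R C t)"
    and K_pd: "unif_pos_def T K" and K_bdd: "bounded (K ` T)"
    and Q_pd: "unif_pos_def T Q"
    and R_pd: "\<And>t. t \<in> T \<Longrightarrow> pos_def (R t)"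
    and lam_pos: "lam > 0"
    and a_deriv: "\<And>t. t \<in> T \<Longrightarrow> (a has_vector_derivative adot t) (at t within T)"
    and d_bdd: "bounded (d ` T)" and eps_bdd: "bounded (\<epsilon> ` T)"
    and P_inv: "\<And>t. t \<in> T \<Longrightarrow> invertible (P t) \<and> Pinv t = matrix_inv (P t)"
    and Pinv_pd: "unif_pos_def T Pinv" and Pinv_bdd: "bounded (Pinv ` T)"
    and s_deriv: "\<And>t. t \<in> T \<Longrightarrow> (s has_vector_derivative sdot t) (at t within T)"
    and atil_deriv: "\<And>t. t \<in> T \<Longrightarrow> (atil has_vector_derivative atdot t) (at t within T)"
    and Pinv_deriv: "\<And>t. t \<in> T \<Longrightarrow> (Pinv has_vector_derivative Pinvdot t) (at t within T)"
    and eq1: "\<And>t. t \<in> T \<Longrightarrow>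
       M t *v sdot t + (C t + K t) *v s t + \<phi> t *v atil t = d t"
    and eq2: "\<And>t. t \<in> T \<Longrightarrow>
       Pinv t *v atdot t - transpose (\<phi> t) *v s t
         + (transpose (\<phi> t) ** matrix_inv (R t) ** \<phi> t + lam *\<^sub>R Pinv t) *v atil t
       = transpose (\<phi> t) *v (matrix_inv (R t) *v \<epsilon> t) - lam *\<^sub>R (Pinv t *v a t) - Pinv t *v adot t"
    and eq3: "\<And>t. t \<in> T \<Longrightarrow>
       Pinvdot t = Pinv t ** ((2 * lam) *\<^sub>R P t - Q t + P t ** transpose (\<phi> t) ** matrix_inv (R t) ** \<phi> t ** P t) ** Pinv t"
    and phi_zero: "\<And>t. t \<in> T \<Longrightarrow> \<phi> t = 0"
  shows "Limsup at_top (\<lambda>t. ereal (norm (stack (s t) (atil t))))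
    \<le> ((SUP t\<in>T. ereal (norm (d t)))
         + ereal (lam_max_T T Pinv) * (SUP t\<in>T. ereal (norm (lam *\<^sub>R a t + adot t))))
      / ereal (min lam (lam_min_T T K / lam_max_T T M) * lam_min_T T (\<lambda>t. blockdiag (M t) (Pinv t)))"
proof -
  have T0: "0 \<in> T" and Tne: "T \<noteq> {}" by (auto simp: T_def)
  have intT: "at t within T = at t" if "t > 0" for t
    by (rule at_within_interior) (use that in \<open>simp add: T_def\<close>)
  from M_pd obtain cM where cM0: "cM > 0" and
    cM: "\<forall>t\<in>T. symmetric_mat (M t) \<and> (\<forall>x. x \<bullet> (M t *v x) \<ge> cM * (norm x)\<^sup>2)"
    unfolding unif_pos_def_def by blast
  from K_pd obtain cK where cK0: "cK > 0" and
    cK: "\<forall>t\<in>T. symmetric_mat (K t) \<and> (\<forall>x. x \<bullet> (K t *v x) \<ge> cK * (norm x)\<^sup>2)"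
    unfolding unif_pos_def_def by blast
  from Pinv_pd obtain cP where cP0: "cP > 0" and
    cP: "\<forall>t\<in>T. symmetric_mat (Pinv t) \<and> (\<forall>x. x \<bullet> (Pinv t *v x) \<ge> cP * (norm x)\<^sup>2)"
    unfolding unif_pos_def_def by blast
  from M_bdd obtain bM where bM: "\<forall>t\<in>T. norm (M t) \<le> bM" unfolding bounded_iff by blast
  from Pinv_bdd obtain bP where bP: "\<forall>t\<in>T. norm (Pinv t) \<le> bP" unfolding bounded_iff by blast
  have Msym: "symmetric_mat (M t)" and Ksym: "symmetric_mat (K t)" and Psym: "symmetric_mat (Pinv t)"
    if "t \<in> T" for t using cM cK cP that by auto
  define blk where "blk t = blockdiag (M t) (Pinv t)" for t
  define kmin where "kmin = lam_min_T T K"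
  define mmax where "mmax = lam_max_T T M"
  define pmax where "pmax = lam_max_T T Pinv"
  define mu where "mu = lam_min_T T blk"
  have Bsym: "symmetric_mat (blk t)" if "t \<in> T" for t
    unfolding blk_def using Msym Psym that by (simp add: blockdiag_sym)
  have Bpd: "min cM cP * (norm x)^2 \<le> x \<bullet> (blk t *v x)" if "t \<in> T" for t x
  proof -
    define u where "u = (\<chi> j. x $ Inl j)"
    define v where "v = (\<chi> k. x $ Inr k)"
    have x: "x = stack u v" unfolding u_def v_def by (rule stack_decomp)
    have "min cM cP * (norm x)^2 = min cM cP * (norm u)^2 + min cM cP * (norm v)^2"
      by (simp add: x norm_stack_sq algebra_simps)
    also have "\<dots> \<le> cM * (norm u)^2 + cP * (norm v)^2"
      by (intro add_mono mult_right_mono) auto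
    also have "\<dots> \<le> u \<bullet> (M t *v u) + v \<bullet> (Pinv t *v v)"
      using cM cP that by (intro add_mono) auto
    also have "\<dots> = x \<bullet> (blk t *v x)" by (simp add: x blk_def blockdiag_quad)
    finally show ?thesis .
  qed
  have lamK: "cK \<le> lam_min (K t)" if "t \<in> T" for t
    using cK that by (intro eig_lower[OF _ lam_min_le(2)[OF Ksym]]) auto
  have lamB: "min cM cP \<le> lam_min (blk t)" if "t \<in> T" for t
    using Bpd that by (intro eig_lower[OF _ lam_min_le(2)[OF Bsym]]) auto
  have lamMmax: "lam_max (M t) \<le> bM * (real CARD('n) * real CARD('n))" if "t \<in> T" for t
    using eig_upper[OF lam_max_ge(2)[OF Msym[OF that]]] bM that
    by (meson mult_right_mono of_nat_0_le_iff order_trans zero_le_mult_iff)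
  have lamPmax: "lam_max (Pinv t) \<le> bP * (real CARD('h) * real CARD('h))" if "t \<in> T" for t
    using eig_upper[OF lam_max_ge(2)[OF Psym[OF that]]] bP that
    by (meson mult_right_mono of_nat_0_le_iff order_trans zero_le_mult_iff)
  have kmin_le: "kmin \<le> lam_min (K t)" if "t \<in> T" for t
    unfolding kmin_def lam_min_T_def by (rule cINF_lower[OF bdd_belowI2[OF lamK] that])
  have kmin_ge: "cK \<le> kmin"
    unfolding kmin_def lam_min_T_def by (rule cINF_greatest[OF Tne lamK])
  have mu_le: "mu \<le> lam_min (blk t)" if "t \<in> T" for t
    unfolding mu_def lam_min_T_def by (rule cINF_lower[OF bdd_belowI2[OF lamB] that])
  have mu_ge: "min cM cP \<le> mu"
    unfolding mu_def lam_min_T_def by (rule cINF_greatest[OF Tne lamB])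
  have mmax_ge: "lam_max (M t) \<le> mmax" if "t \<in> T" for t
    unfolding mmax_def lam_max_T_def by (rule cSUP_upper[OF that bdd_aboveI2[OF lamMmax]])
  have pmax_ge: "lam_max (Pinv t) \<le> pmax" if "t \<in> T" for t
    unfolding pmax_def lam_max_T_def by (rule cSUP_upper[OF that bdd_aboveI2[OF lamPmax]])
  have mu0: "mu > 0" using mu_ge cM0 cP0 by linarith
  have kmin0: "kmin > 0" using kmin_ge cK0 by linarith
  have QM_low: "mu * (norm x)^2 \<le> x \<bullet> (M t *v x)" if "t \<in> T" for t x
  proof -
    have "mu * (norm x)^2 \<le> lam_min (blk t) * (norm (stack x (0::real^'h)))^2"
      using mu_le[OF that] by (simp add: norm_stack0 mult_right_mono)
    also have "\<dots> \<le> stack x 0 \<bullet> (blk t *v stack x 0)" by (rule lam_min_le(1)[OF Bsym[OF that]])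
    also have "\<dots> = x \<bullet> (M t *v x)" by (simp add: blk_def blockdiag_quad)
    finally show ?thesis .
  qed
  have QP_up: "mu * (norm y)^2 \<le> y \<bullet> (Pinv t *v y)" if "t \<in> T" for t y
  proof -
    have "mu * (norm y)^2 \<le> lam_min (blk t) * (norm (stack (0::real^'n) y))^2"
      using mu_le[OF that] by (simp add: norm_stack0 mult_right_mono)
    also have "\<dots> \<le> stack 0 y \<bullet> (blk t *v stack 0 y)" by (rule lam_min_le(1)[OF Bsym[OF that]])
    also have "\<dots> = y \<bullet> (Pinv t *v y)" by (simp add: blk_def blockdiag_quad)
    finally show ?thesis .
  qed
  have QM_up: "x \<bullet> (M t *v x) \<le> mmax * (norm x)^2" if "t \<in> T" for t x
    using lam_max_ge(1)[OF Msym[OF that], of x] mmax_ge[OF that]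
    by (meson mult_right_mono order_trans zero_le_power2)
  have QK: "kmin * (norm x)^2 \<le> x \<bullet> (K t *v x)" if "t \<in> T" for t x
    using lam_min_le(1)[OF Ksym[OF that], of x] kmin_le[OF that]
    by (meson mult_right_mono order_trans zero_le_power2)
  obtain i :: 'n where True by simp
  obtain j :: 'h where True by simp
  have mu_mmax: "mu \<le> mmax"
    using QM_low[OF T0, of "axis i 1"] QM_up[OF T0, of "axis i 1"] by simp
  have mu_pmax: "mu \<le> pmax"
    using QP_up[OF T0, of "axis j 1"] lam_max_ge(1)[OF Psym[OF T0], of "axis j 1"] pmax_ge[OF T0]
    by simp
  have mmax0: "mmax > 0" using mu0 mu_mmax by linarith
  have pmax0: "pmax > 0" using mu0 mu_pmax by linarith
  define rho where "rho = min lam (kmin / mmax)"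
  have rho0: "rho > 0" using lam_pos kmin0 mmax0 by (simp add: rho_def)
  have sdyn: "M t *v sdot t = d t - (C t + K t) *v s t" if "t \<in> T" for t
    using eq1[OF that] phi_zero[OF that] by (simp add: algebra_simps)
  define w where "w t = lam *\<^sub>R a t + adot t" for t
  have adyn: "atdot t = - (lam *\<^sub>R atil t) - w t" if "t \<in> T" for t
  proof -
    define z where "z = atdot t + lam *\<^sub>R atil t + w t"
    have H: "Pinv t *v adot t + (Pinv t *v atdot t + lam *\<^sub>R (Pinv t *v atil t)) =
      - (lam *\<^sub>R (Pinv t *v a t))"
      using eq2[OF that] phi_zero[OF that]
      by (simp add: transpose_zero_mat matrix_vector_right_distrib
          matrix_vector_mult_scaleR scaleR_matrix_vector_assoc[symmetric] algebra_simps)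
    have "Pinv t *v z = Pinv t *v adot t + (Pinv t *v atdot t + lam *\<^sub>R (Pinv t *v atil t))
       + lam *\<^sub>R (Pinv t *v a t)"
      by (simp add: z_def w_def matrix_vector_right_distrib
          matrix_vector_mult_scaleR algebra_simps)
    then have "Pinv t *v z = 0" using H by simp
    then have "cP * (norm z)^2 \<le> 0" using cP that by (metis inner_zero_right)
    then have "z = 0" using cP0 by (simp add: mult_le_0_iff)
    moreover have "atdot t = z - lam *\<^sub>R atil t - w t" by (simp add: z_def)
    ultimately show ?thesis by simp
  qed
  have sder: "(s has_vector_derivative sdot t) (at t)" and Mder: "(M has_vector_derivative Mdot t) (at t)"
    and ader: "(atil has_vector_derivative atdot t) (at t)" if "t > 0" for t
    using s_deriv[of t] M_deriv[of t] atil_deriv[of t] that intT[OF that] by (auto simp: T_def)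
  have s_ev: "eventually (\<lambda>t. norm (s t) \<le> Dr / (rho * mu) + \<delta>) at_top"
    if Dr0: "Dr \<ge> 0" and dle: "\<And>t. t \<in> T \<Longrightarrow> norm (d t) \<le> Dr" and \<delta>0: "\<delta> > 0" for Dr \<delta>
  proof -
    define q where "q = mmax / mu"
    have q1: "q \<ge> 1" using mu_mmax mu0 by (simp add: q_def)
    define e where "e = \<delta> / q"
    have e0: "e > 0" using \<delta>0 q1 by (simp add: e_def)
    define B where "B = mmax * (Dr / kmin + e)^2"
    define V where "V t = s t \<bullet> (M t *v s t)" for t
    define V' where "V' t = s t \<bullet> (M t *v sdot t + Mdot t *v s t) + sdot t \<bullet> (M t *v s t)" for t
    have derVw: "(V has_vector_derivative V' t) (at t within T)" if "t \<in> T" for t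
      unfolding V_def[abs_def] V'_def
      by (intro bounded_bilinear.has_vector_derivative[OF bounded_bilinear_inner]
          bounded_bilinear.has_vector_derivative[OF bb_mv] s_deriv M_deriv that)
    have contV: "continuous_on {0..} V"
      unfolding T_def[symmetric]
      using derVw continuous_on_eq_continuous_within has_vector_derivative_continuous by blast
    have derV: "(V has_real_derivative V' t) (at t)" if "t > 0" for t
      using derVw[of t] that intT[OF that] by (simp add: T_def has_real_derivative_iff_has_vector_derivative)
    have V'_eq: "V' t = 2 * (s t \<bullet> d t) - 2 * (s t \<bullet> (K t *v s t))" if "t \<in> T" for t
    proof -
      have e1: "sdot t \<bullet> (M t *v s t) = s t \<bullet> (M t *v sdot t)"
        using sym_inner[OF Msym[OF that], of "sdot t" "s t"] by (simp add: inner_commute)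
      have "s t \<bullet> ((Mdot t - 2 *\<^sub>R C t) *v s t) = 0" by (rule skew_quad[OF skew[OF that]])
      then have e2: "s t \<bullet> (Mdot t *v s t) = 2 * (s t \<bullet> (C t *v s t))"
        by (simp add: matrix_vector_mult_diff_rdistrib scaleR_matrix_vector_assoc[symmetric] inner_diff_right)
      have e3: "s t \<bullet> (M t *v sdot t) = s t \<bullet> d t - s t \<bullet> (C t *v s t) - s t \<bullet> (K t *v s t)"
        by (simp add: sdyn[OF that] matrix_vector_mult_add_rdistrib inner_diff_right inner_add_right)
      show ?thesis unfolding V'_def by (simp add: inner_add_right e1 e2 e3)
    qed
    have dec: "V' t \<le> - (2 * kmin * e^2)" if t0: "t > 0" and VB: "V t > B" for t
    proof -
      have tT: "t \<in> T" using t0 by (simp add: T_def)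
      define x where "x = norm (s t)"
      have "mmax * (Dr / kmin + e)^2 < mmax * x^2"
        using VB QM_up[OF tT, of "s t"] by (simp add: B_def V_def x_def)
      then have "(Dr / kmin + e)^2 < x^2" using mmax0 by simp
      then have xg: "x > Dr / kmin + e" by (rule power_less_imp_less_base) (simp add: x_def)
      have "s t \<bullet> d t \<le> x * Dr"
        using norm_cauchy_schwarz[of "s t" "d t"] dle[OF tT] by (simp add: x_def)
           (meson mult_left_mono norm_ge_zero order_trans)
      moreover have "kmin * x^2 \<le> s t \<bullet> (K t *v s t)" using QK[OF tT] by (simp add: x_def)
      ultimately have "V' t \<le> 2 * x * Dr - 2 * kmin * x^2" using V'_eq[OF tT] by simp
      also have "\<dots> \<le> - (2 * kmin * e^2)" by (rule alg_bound[OF kmin0 Dr0 e0 xg])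
      finally show ?thesis .
    qed
    have evV: "eventually (\<lambda>t. V t \<le> B) at_top"
      by (rule threshold[OF contV derV _ dec]) (use kmin0 e0 in auto)
    show ?thesis
      using evV eventually_ge_at_top[of 0]
    proof eventually_elim
      case (elim t)
      then have tT: "t \<in> T" by (simp add: T_def)
      define x where "x = norm (s t)"
      have "mu * x^2 \<le> B" using QM_low[OF tT, of "s t"] elim by (simp add: V_def x_def)
      then have "x^2 \<le> q * (Dr / kmin + e)^2"
        using mu0 by (simp add: B_def q_def field_simps)
      also have "\<dots> \<le> (q * (Dr / kmin) + \<delta>)^2"
        unfolding e_def by (rule sq_shift[OF q1 _ \<delta>0]) (use Dr0 kmin0 in simp)
      finally have "x \<le> q * (Dr / kmin) + \<delta>"
        by (rule power2_le_imp_le) (use q1 Dr0 kmin0 \<delta>0 in simp)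
      moreover have "q * (Dr / kmin) \<le> Dr / (rho * mu)"
      proof -
        have "rho \<le> kmin / mmax" by (simp add: rho_def)
        then have "rho * mmax \<le> kmin" using mmax0 by (simp add: field_simps)
        then have "mmax / (mu * kmin) \<le> 1 / (rho * mu)"
          using mu0 kmin0 rho0 mmax0 by (simp add: field_simps)
        then have "Dr * (mmax / (mu * kmin)) \<le> Dr * (1 / (rho * mu))"
          using Dr0 by (intro mult_left_mono)
        then show ?thesis by (simp add: q_def mult.commute)
      qed
      ultimately show ?case by (simp add: x_def)
    qed
  qed
  have a_ev: "eventually (\<lambda>t. norm (atil t) \<le> Wr / lam + \<delta>) at_top"
    if Wr0: "Wr \<ge> 0" and wle: "\<And>t. t \<in> T \<Longrightarrow> norm (w t) \<le> Wr" and \<delta>0: "\<delta> > 0" for Wr \<delta>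
  proof -
    define B where "B = (Wr / lam + \<delta>)^2"
    define U where "U t = atil t \<bullet> atil t" for t
    define U' where "U' t = atil t \<bullet> atdot t + atdot t \<bullet> atil t" for t
    have derUw: "(U has_vector_derivative U' t) (at t within T)" if "t \<in> T" for t
      unfolding U_def[abs_def] U'_def
      by (intro bounded_bilinear.has_vector_derivative[OF bounded_bilinear_inner] atil_deriv that)
    have contU: "continuous_on {0..} U"
      unfolding T_def[symmetric]
      using derUw continuous_on_eq_continuous_within has_vector_derivative_continuous by blast
    have derU: "(U has_real_derivative U' t) (at t)" if "t > 0" for t
      using derUw[of t] that intT[OF that] by (simp add: T_def has_real_derivative_iff_has_vector_derivative)
    have dec: "U' t \<le> - (2 * lam * \<delta>^2)" if t0: "t > 0" and UB: "U t > B" for t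
    proof -
      have tT: "t \<in> T" using t0 by (simp add: T_def)
      define x where "x = norm (atil t)"
      have "(Wr / lam + \<delta>)^2 < x^2" using UB by (simp add: B_def U_def x_def dot_square_norm)
      then have xg: "x > Wr / lam + \<delta>" by (rule power_less_imp_less_base) (simp add: x_def)
      have "- (atil t \<bullet> w t) \<le> x * Wr"
        using norm_cauchy_schwarz[of "- atil t" "w t"] wle[OF tT]
        by (simp add: x_def) (meson mult_left_mono norm_ge_zero order_trans)
      moreover have "U' t = - 2 * lam * x^2 - 2 * (atil t \<bullet> w t)"
      proof -
        have "U' t = 2 * (atil t \<bullet> atdot t)" unfolding U'_def by (simp add: inner_commute)
        also have "atil t \<bullet> atdot t = - (lam * (atil t \<bullet> atil t)) - atil t \<bullet> w t"
          by (simp add: adyn[OF tT] inner_diff_right)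
        also have "atil t \<bullet> atil t = x^2" by (simp add: x_def dot_square_norm)
        finally show ?thesis by (simp add: algebra_simps)
      qed
      ultimately have "U' t \<le> 2 * x * Wr - 2 * lam * x^2" by linarith
      also have "\<dots> \<le> - (2 * lam * \<delta>^2)" by (rule alg_bound[OF lam_pos Wr0 \<delta>0 xg])
      finally show ?thesis .
    qed
    have evU: "eventually (\<lambda>t. U t \<le> B) at_top"
      by (rule threshold[OF contU derU _ dec]) (use lam_pos \<delta>0 in auto)
    show ?thesis
      using evU
    proof eventually_elim
      case (elim t)
      then have "(norm (atil t))^2 \<le> (Wr / lam + \<delta>)^2" by (simp add: U_def B_def dot_square_norm)
      then show ?case by (rule power2_le_imp_le) (use Wr0 lam_pos \<delta>0 in simp)
    qed
  qed
  define De where "De = (SUP t\<in>T. ereal (norm (d t)))"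
  define We where "We = (SUP t\<in>T. ereal (norm (w t)))"
  from d_bdd obtain bd where bd: "\<forall>x\<in>d ` T. norm x \<le> bd" unfolding bounded_iff by blast
  have De_le: "De \<le> ereal bd" unfolding De_def by (rule SUP_least) (use bd in auto)
  have De_ge: "ereal (norm (d 0)) \<le> De" unfolding De_def by (rule SUP_upper[OF T0])
  obtain Dr where Dr: "De = ereal Dr" using De_le De_ge by (cases De) auto
  have Dr0: "Dr \<ge> 0" using De_ge Dr by (metis ereal_less_eq(3) norm_ge_zero order_trans)
  have dle: "norm (d t) \<le> Dr" if "t \<in> T" for t
  proof -
    have "ereal (norm (d t)) \<le> De" unfolding De_def by (rule SUP_upper[OF that])
    then show ?thesis using Dr by simp
  qed
  have We_ge: "ereal (norm (w 0)) \<le> We" unfolding We_def by (rule SUP_upper[OF T0])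
  have rm0: "rho * mu > 0" using rho0 mu0 by simp
  have main: "Limsup at_top (\<lambda>t. ereal (norm (stack (s t) (atil t)))) \<le> (De + ereal pmax * We) / ereal (rho * mu)"
  proof (cases "We = \<infinity>")
    case True
    then show ?thesis using pmax0 rm0 by (simp add: Dr)
  next
    case False
    then obtain Wr where Wr: "We = ereal Wr" using We_ge by (cases We) auto
    have Wr0: "Wr \<ge> 0" using We_ge Wr by (metis ereal_less_eq(3) norm_ge_zero order_trans)
    have wle: "norm (w t) \<le> Wr" if "t \<in> T" for t
    proof -
      have "ereal (norm (w t)) \<le> We" unfolding We_def by (rule SUP_upper[OF that])
      then show ?thesis using Wr by simp
    qed
    define Tg where "Tg = (Dr + pmax * Wr) / (rho * mu)"
    have rhs: "(De + ereal pmax * We) / ereal (rho * mu) = ereal Tg"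
      using rm0 rho0 mu0 by (simp add: Dr Wr Tg_def)
    have Wl: "Wr / lam \<le> pmax * Wr / (rho * mu)"
    proof -
      have "rho * mu \<le> lam * pmax"
        using rho0 mu0 mu_pmax by (intro mult_mono) (auto simp: rho_def)
      then have "Wr * (rho * mu) \<le> Wr * (lam * pmax)" using Wr0 by (intro mult_left_mono)
      then show ?thesis using rm0 lam_pos by (simp add: divide_simps algebra_simps)
    qed
    have "Limsup at_top (\<lambda>t. ereal (norm (stack (s t) (atil t)))) \<le> ereal Tg"
      unfolding Limsup_le_iff
    proof (intro allI impI)
      fix y assume y: "y > ereal Tg"
      show "\<forall>\<^sub>F t in at_top. y > ereal (norm (stack (s t) (atil t)))"
      proof (cases y)
        case (real yr)
        then have yr: "yr > Tg" using y by simp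
        define \<delta> where "\<delta> = (yr - Tg) / 3"
        have \<delta>0: "\<delta> > 0" using yr by (simp add: \<delta>_def)
        have ev1: "eventually (\<lambda>t. norm (s t) \<le> Dr / (rho * mu) + \<delta>) at_top"
          by (rule s_ev) (use Dr0 dle \<delta>0 in auto)
        have ev2: "eventually (\<lambda>t. norm (atil t) \<le> Wr / lam + \<delta>) at_top"
          by (rule a_ev) (use Wr0 wle \<delta>0 in auto)
        show ?thesis
          using ev1 ev2
        proof eventually_elim
          case (elim t)
          have "norm (stack (s t) (atil t)) \<le> norm (s t) + norm (atil t)" by (rule norm_stack_le)
          also have "\<dots> \<le> Dr / (rho * mu) + pmax * Wr / (rho * mu) + 2 * \<delta>"
            using elim Wl by linarith
          also have "Dr / (rho * mu) + pmax * Wr / (rho * mu) = Tg"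
            by (simp add: Tg_def add_divide_distrib)
          finally have "norm (stack (s t) (atil t)) \<le> Tg + 2 * \<delta>" .
          moreover have "Tg + 2 * \<delta> < yr" unfolding \<delta>_def using yr by (simp add: field_simps)
          ultimately have "norm (stack (s t) (atil t)) < yr" by linarith
          then show ?case using real by simp
        qed
      next
        case PInf
        then show ?thesis by simp
      next
        case MInf
        then show ?thesis using y by simp
      qed
    qed
    then show ?thesis using rhs by simp
  qed
  have e1: "lam_min_T T (\<lambda>t. blockdiag (M t) (Pinv t)) = mu" unfolding mu_def blk_def[abs_def] ..
  have e2: "(SUP t\<in>T. ereal (norm (lam *\<^sub>R a t + adot t))) = We" unfolding We_def w_def ..
  show ?thesis
    unfolding e1 e2 De_def[symmetric] kmin_def[symmetric] mmax_def[symmetric] pmax_def[symmetric]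
    unfolding rho_def[symmetric] by (rule main)
qed

end
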